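(* Let $P$ be a finite poset with labeling $\omega:P\to\{1,\dots,p\}$ such that $P$ is $\omega$-consistent with rank function $\rho$, and assume $\omega(x)<\omega(y)$ whenever $\rho(x)<\rho(y)$. Let $x,y\in P$ be incomparable with $\rho(y)=\rho(x)+1$. Let $P'$ be the poset on the same set whose order is the transitive closure of the covering relations of $P$ together with $x\prec y$, and $P''$ the poset whose order is the transitive closure of the covering relations of $P$ together with $y\prec x$. Then $P'$ and $P''$, labeled by the same $\omega$, are $\omega$-consistent and have the same rank function $\rho$ as $(P,\omega)$.
   Context: Write $x\prec y$ if $y$ covers $x$ and $E(P)=\{(x,y):x\prec y\}$. A labeling $\omega$ induces $\epsilon:E(P)\to\{-1,1\}$ with $\epsilon(x,y)=1$ if $\omega(x)<\omega(y)$ and $-1$ otherwise. $P$ is $\epsilon$-graded ($\omega$-graded) if $\sum_{i=1}^n\epsilon(x_{i-1},x_i)$ is the same for every maximal chain $x_0\prec\cdots\prec x_n$. $P$ is $\omega$-consistent if each principal ideal $\Lambda_z=\{w\le z\}$ is graded with respect to the restriction of $\epsilon$ to $E(\Lambda_z)$; the rank function is $\rho(z)=$ this common sum for $\Lambda_z$, i.e. the $\epsilon$-weight of any saturated chain from a minimal element of $P$ to $z$. For $P'$ and $P''$, $\epsilon$ and $\rho$ are computed from their own covering relations with the same $\omega$. *)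

theory Defs
  imports Main
begin

definition poset_on :: "'a set \<Rightarrow> ('a \<Rightarrow> 'a \<Rightarrow> bool) \<Rightarrow> bool" where
  "poset_on S le \<longleftrightarrow>
     (\<forall>a\<in>S. le a a) \<and>
     (\<forall>a\<in>S. \<forall>b\<in>S. le a b \<and> le b a \<longrightarrow> a = b) \<and>
     (\<forall>a\<in>S. \<forall>b\<in>S. \<forall>c\<in>S. le a b \<and> le b c \<longrightarrow> le a c)"

definition covers :: "'a set \<Rightarrow> ('a \<Rightarrow> 'a \<Rightarrow> bool) \<Rightarrow> 'a \<Rightarrow> 'a \<Rightarrow> bool" where
  "covers S le a b \<longleftrightarrow> a \<in> S \<and> b \<in> S \<and> le a b \<and> a \<noteq> b \<and>
     \<not> (\<exists>z\<in>S. le a z \<and> le z b \<and> z \<noteq> a \<and> z \<noteq> b)"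

definition minimal_in :: "'a set \<Rightarrow> ('a \<Rightarrow> 'a \<Rightarrow> bool) \<Rightarrow> 'a \<Rightarrow> bool" where
  "minimal_in S le a \<longleftrightarrow> a \<in> S \<and> (\<forall>b\<in>S. le b a \<longrightarrow> b = a)"

definition maximal_in :: "'a set \<Rightarrow> ('a \<Rightarrow> 'a \<Rightarrow> bool) \<Rightarrow> 'a \<Rightarrow> bool" where
  "maximal_in S le a \<longleftrightarrow> a \<in> S \<and> (\<forall>b\<in>S. le a b \<longrightarrow> b = a)"

definition eps :: "('a \<Rightarrow> nat) \<Rightarrow> 'a \<Rightarrow> 'a \<Rightarrow> int" where
  "eps \<omega> a b = (if \<omega> a < \<omega> b then 1 else -1)"

definition sat_chain :: "'a set \<Rightarrow> ('a \<Rightarrow> 'a \<Rightarrow> bool) \<Rightarrow> 'a list \<Rightarrow> bool" where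
  "sat_chain S le c \<longleftrightarrow> c \<noteq> [] \<and> set c \<subseteq> S \<and>
     (\<forall>i. Suc i < length c \<longrightarrow> covers S le (c ! i) (c ! Suc i))"

definition chain_weight :: "('a \<Rightarrow> nat) \<Rightarrow> 'a list \<Rightarrow> int" where
  "chain_weight \<omega> c = (\<Sum>i<length c - 1. eps \<omega> (c ! i) (c ! Suc i))"

definition maximal_chain :: "'a set \<Rightarrow> ('a \<Rightarrow> 'a \<Rightarrow> bool) \<Rightarrow> 'a list \<Rightarrow> bool" where
  "maximal_chain S le c \<longleftrightarrow> sat_chain S le c \<and> minimal_in S le (hd c) \<and> maximal_in S le (last c)"

definition omega_graded :: "'a set \<Rightarrow> ('a \<Rightarrow> 'a \<Rightarrow> bool) \<Rightarrow> ('a \<Rightarrow> nat) \<Rightarrow> bool" where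
  "omega_graded S le \<omega> \<longleftrightarrow>
     (\<forall>c d. maximal_chain S le c \<and> maximal_chain S le d \<longrightarrow> chain_weight \<omega> c = chain_weight \<omega> d)"

definition principal_ideal :: "'a set \<Rightarrow> ('a \<Rightarrow> 'a \<Rightarrow> bool) \<Rightarrow> 'a \<Rightarrow> 'a set" where
  "principal_ideal S le z = {w \<in> S. le w z}"

definition omega_consistent :: "'a set \<Rightarrow> ('a \<Rightarrow> 'a \<Rightarrow> bool) \<Rightarrow> ('a \<Rightarrow> nat) \<Rightarrow> bool" where
  "omega_consistent S le \<omega> \<longleftrightarrow> (\<forall>z\<in>S. omega_graded (principal_ideal S le z) le \<omega>)"

definition rank :: "'a set \<Rightarrow> ('a \<Rightarrow> 'a \<Rightarrow> bool) \<Rightarrow> ('a \<Rightarrow> nat) \<Rightarrow> 'a \<Rightarrow> int" where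
  "rank S le \<omega> z = chain_weight \<omega>
     (SOME c. sat_chain S le c \<and> minimal_in S le (hd c) \<and> last c = z)"

definition add_cover :: "'a set \<Rightarrow> ('a \<Rightarrow> 'a \<Rightarrow> bool) \<Rightarrow> 'a \<Rightarrow> 'a \<Rightarrow> ('a \<Rightarrow> 'a \<Rightarrow> bool)" where
  "add_cover S le u v = (\<lambda>a b. (a, b) \<in> ({(s, t). covers S le s t} \<union> {(u, v)})\<^sup>*)"

end

theory Submission
  imports Defs
begin

lemma sat_chain_snoc:
  assumes "c \<noteq> []"
  shows "sat_chain S R (c @ [z]) \<longleftrightarrow> sat_chain S R c \<and> covers S R (last c) z"
proof
  assume H: "sat_chain S R (c @ [z])"
  have A: "\<forall>i. Suc i < length c \<longrightarrow> covers S R (c ! i) (c ! Suc i)"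
  proof (intro allI impI)
    fix i assume i: "Suc i < length c"
    then have "covers S R ((c @ [z]) ! i) ((c @ [z]) ! Suc i)"
      using H unfolding sat_chain_def by auto
    with i show "covers S R (c ! i) (c ! Suc i)" by (simp add: nth_append)
  qed
  obtain m where m: "length c = Suc m" using assms by (cases c) auto
  have "covers S R ((c @ [z]) ! m) ((c @ [z]) ! Suc m)"
    using H m unfolding sat_chain_def by auto
  then have B: "covers S R (last c) z" using m assms
    by (simp add: nth_append last_conv_nth)
  show "sat_chain S R c \<and> covers S R (last c) z"
    using A B H assms unfolding sat_chain_def by auto
next
  assume H: "sat_chain S R c \<and> covers S R (last c) z"
  obtain m where m: "length c = Suc m" using assms by (cases c) auto
  have "covers S R ((c @ [z]) ! i) ((c @ [z]) ! Suc i)" if i: "Suc i < length (c @ [z])" for i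
  proof (cases "Suc i < length c")
    case True
    then show ?thesis using H unfolding sat_chain_def by (simp add: nth_append)
  next
    case False
    then have "i = m" using i m by auto
    then show ?thesis using H m assms by (simp add: nth_append last_conv_nth)
  qed
  then show "sat_chain S R (c @ [z])" using H unfolding sat_chain_def covers_def by auto
qed

lemma chain_weight_snoc:
  assumes "c \<noteq> []"
  shows "chain_weight \<omega> (c @ [z]) = chain_weight \<omega> c + eps \<omega> (last c) z"
proof -
  obtain m where m: "length c = Suc m" using assms by (cases c) auto
  have "chain_weight \<omega> (c @ [z]) = (\<Sum>i<Suc m. eps \<omega> ((c @ [z]) ! i) ((c @ [z]) ! Suc i))"
    unfolding chain_weight_def using m by simp
  also have "\<dots> = (\<Sum>i<m. eps \<omega> ((c @ [z]) ! i) ((c @ [z]) ! Suc i))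
      + eps \<omega> ((c @ [z]) ! m) ((c @ [z]) ! Suc m)" by simp
  also have "(\<Sum>i<m. eps \<omega> ((c @ [z]) ! i) ((c @ [z]) ! Suc i)) = chain_weight \<omega> c"
    unfolding chain_weight_def using m by (intro sum.cong) (auto simp: nth_append)
  also have "eps \<omega> ((c @ [z]) ! m) ((c @ [z]) ! Suc m) = eps \<omega> (last c) z"
    using m assms by (simp add: nth_append last_conv_nth)
  finally show ?thesis .
qed

lemma chain_weight_pot:
  assumes "\<forall>u v. covers S R u v \<longrightarrow> f v = f u + eps \<omega> u v"
  shows "sat_chain S R c \<Longrightarrow> chain_weight \<omega> c = f (last c) - f (hd c)"
proof (induction c rule: rev_induct)
  case Nil
  then show ?case by (simp add: sat_chain_def)
next
  case (snoc z c)
  show ?case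
  proof (cases "c = []")
    case True
    then show ?thesis by (simp add: chain_weight_def)
  next
    case False
    then have "sat_chain S R c" "covers S R (last c) z" using snoc.prems sat_chain_snoc[OF False] by auto
    then show ?thesis using snoc False assms chain_weight_snoc[OF False] by simp
  qed
qed

lemma poset_refl: "poset_on S R \<Longrightarrow> a \<in> S \<Longrightarrow> R a a" unfolding poset_on_def by blast
lemma poset_trans: "poset_on S R \<Longrightarrow> a \<in> S \<Longrightarrow> b \<in> S \<Longrightarrow> c \<in> S \<Longrightarrow> R a b \<Longrightarrow> R b c \<Longrightarrow> R a c"
  unfolding poset_on_def by blast
lemma poset_anti: "poset_on S R \<Longrightarrow> a \<in> S \<Longrightarrow> b \<in> S \<Longrightarrow> R a b \<Longrightarrow> R b a \<Longrightarrow> a = b"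
  unfolding poset_on_def by blast

lemma chain_le_last:
  assumes P: "poset_on S R"
  shows "sat_chain S R c \<Longrightarrow> a \<in> set c \<Longrightarrow> R a (last c)"
proof (induction c rule: rev_induct)
  case Nil
  then show ?case by simp
next
  case (snoc z c)
  have zS: "z \<in> S" using snoc.prems(1) unfolding sat_chain_def by simp
  show ?case
  proof (cases "c = []")
    case True
    then have "a = z" using snoc.prems(2) by simp
    then show ?thesis using zS poset_refl[OF P] by simp
  next
    case False
    then have sc: "sat_chain S R c" and cv: "covers S R (last c) z"
      using snoc.prems(1) sat_chain_snoc[OF False] by simp_all
    show ?thesis
    proof (cases "a = z")
      case True
      then show ?thesis using zS poset_refl[OF P] by simp
    next
      case False
      then have ac: "a \<in> set c" using snoc.prems(2) by simp
      then have r1: "R a (last c)" using snoc.IH sc by blast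
      have aS: "a \<in> S" using sc ac unfolding sat_chain_def by blast
      have lS: "last c \<in> S" using cv unfolding covers_def by blast
      have r2: "R (last c) z" using cv unfolding covers_def by blast
      show ?thesis using poset_trans[OF P aS lS zS r1 r2] by simp
    qed
  qed
qed

lemma h_strict:
  assumes "finite S" "poset_on S R" "a \<in> S" "b \<in> S" "R a b" "a \<noteq> b"
  shows "card {v\<in>S. R v a} < card {v\<in>S. R v b}"
proof (rule psubset_card_mono)
  show "finite {v\<in>S. R v b}" using assms by auto
  show "{v\<in>S. R v a} \<subset> {v\<in>S. R v b}"
  proof
    show "{v\<in>S. R v a} \<subseteq> {v\<in>S. R v b}" using assms poset_trans[OF assms(2)] by blast
    have "b \<notin> {v\<in>S. R v a}" using assms poset_anti[OF assms(2)] by blast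
    moreover have "b \<in> {v\<in>S. R v b}" using assms poset_refl[OF assms(2)] by blast
    ultimately show "{v\<in>S. R v a} \<noteq> {v\<in>S. R v b}" by blast
  qed
qed

lemma exists_cover:
  assumes fin: "finite S" and P: "poset_on S R" and z: "z \<in> S" and nm: "\<not> minimal_in S R z"
  shows "\<exists>u. covers S R u z"
proof -
  define D where "D = {w\<in>S. R w z \<and> w \<noteq> z}"
  define h where "h = (\<lambda>a. card {v\<in>S. R v a})"
  have D: "D \<noteq> {}" using z nm unfolding D_def minimal_in_def by blast
  have fD: "finite D" using fin unfolding D_def by simp
  have "Max (h ` D) \<in> h ` D" using D fD by (intro Max_in) simp_all
  then obtain u where u: "u \<in> D" "h u = Max (h ` D)" by (metis imageE)
  have uS: "u \<in> S" "R u z" "u \<noteq> z" using u(1) unfolding D_def by simp_all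
  have nov: "\<not> (\<exists>v\<in>S. R u v \<and> R v z \<and> v \<noteq> u \<and> v \<noteq> z)"
  proof
    assume "\<exists>v\<in>S. R u v \<and> R v z \<and> v \<noteq> u \<and> v \<noteq> z"
    then obtain v where v: "v \<in> S" "R u v" "R v z" "v \<noteq> u" "v \<noteq> z" by blast
    then have "v \<in> D" unfolding D_def by simp
    then have "h v \<le> Max (h ` D)" using fD by simp
    then have "h v \<le> h u" using u(2) by simp
    moreover have "h u < h v" unfolding h_def
      using h_strict[OF fin P uS(1) v(1) v(2)] v(4) by simp
    ultimately show False by simp
  qed
  have "covers S R u z" unfolding covers_def using uS z nov by blast
  then show ?thesis by blast
qed

lemma exists_chain:
  assumes fin: "finite S" and P: "poset_on S R"
  shows "z \<in> S \<Longrightarrow> \<exists>c. sat_chain S R c \<and> minimal_in S R (hd c) \<and> last c = z"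
proof (induction z rule: measure_induct_rule[of "\<lambda>a. card {v\<in>S. R v a}"])
  case (less z)
  show ?case
  proof (cases "minimal_in S R z")
    case True
    have "sat_chain S R [z]" using less.prems unfolding sat_chain_def by simp
    then show ?thesis using True by (intro exI[of _ "[z]"]) simp
  next
    case False
    obtain u where u: "covers S R u z" using exists_cover[OF fin P less.prems False] by blast
    then have uS: "u \<in> S" "R u z" "u \<noteq> z" unfolding covers_def by simp_all
    have "card {v\<in>S. R v u} < card {v\<in>S. R v z}"
      using h_strict[OF fin P uS(1) less.prems uS(2,3)] .
    then obtain c where c: "sat_chain S R c" "minimal_in S R (hd c)" "last c = u"
      using less.IH[OF _ uS(1)] by blast
    then have ne: "c \<noteq> []" unfolding sat_chain_def by simp
    have sc: "sat_chain S R (c @ [z])" using sat_chain_snoc[OF ne] c(1,3) u by simp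
    have "hd (c @ [z]) = hd c" using ne by simp
    then show ?thesis using sc c(2) by (intro exI[of _ "c @ [z]"]) simp
  qed
qed

lemma consistent_pot:
  assumes fin: "finite S" and P: "poset_on S R"
    and cov: "\<forall>u v. covers S R u v \<longrightarrow> f v = f u + eps \<omega> u v"
    and mn: "\<forall>m. minimal_in S R m \<longrightarrow> f m = 0"
  shows "omega_consistent S R \<omega> \<and> (\<forall>z\<in>S. rank S R \<omega> z = f z)"
proof
  have W: "chain_weight \<omega> c = f z"
    if z: "z \<in> S" and mc: "maximal_chain (principal_ideal S R z) R c" for z c
  proof -
    let ?I = "principal_ideal S R z"
    have IS: "?I \<subseteq> S" unfolding principal_ideal_def by auto
    have zI: "z \<in> ?I" using z poset_refl[OF P] unfolding principal_ideal_def by auto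
    have sc: "sat_chain ?I R c" using mc unfolding maximal_chain_def by auto
    have covI: "covers S R a b" if "covers ?I R a b" for a b
    proof -
      have "a \<in> ?I" "b \<in> ?I" "R a b" "a \<noteq> b" using that unfolding covers_def by auto
      moreover have "\<not> (\<exists>w\<in>S. R a w \<and> R w b \<and> w \<noteq> a \<and> w \<noteq> b)"
      proof
        assume "\<exists>w\<in>S. R a w \<and> R w b \<and> w \<noteq> a \<and> w \<noteq> b"
        then obtain w where w: "w \<in> S" "R a w" "R w b" "w \<noteq> a" "w \<noteq> b" by blast
        have "b \<in> S" "R b z" using \<open>b \<in> ?I\<close> unfolding principal_ideal_def by auto
        then have "R w z" using w z poset_trans[OF P] by blast
        then have "w \<in> ?I" using w unfolding principal_ideal_def by auto
        then show False using that w unfolding covers_def by blast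
      qed
      ultimately show ?thesis using IS unfolding covers_def by auto
    qed
    have scS: "sat_chain S R c" using sc IS covI unfolding sat_chain_def by auto
    have ne: "c \<noteq> []" using sc unfolding sat_chain_def by auto
    have hdI: "hd c \<in> ?I" using sc ne unfolding sat_chain_def by auto
    have "minimal_in S R (hd c)"
      unfolding minimal_in_def
    proof (intro conjI ballI impI)
      show "hd c \<in> S" using hdI IS by auto
      fix b assume b: "b \<in> S" "R b (hd c)"
      moreover have "hd c \<in> S" "R (hd c) z" using hdI unfolding principal_ideal_def by auto
      ultimately have "R b z" using z poset_trans[OF P] by blast
      then have "b \<in> ?I" using b unfolding principal_ideal_def by auto
      then show "b = hd c" using mc b unfolding maximal_chain_def minimal_in_def by auto
    qed
    then have h0: "f (hd c) = 0" using mn by auto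
    have lI: "last c \<in> ?I" using sc ne unfolding sat_chain_def by auto
    then have "R (last c) z" unfolding principal_ideal_def by auto
    then have "last c = z" using mc zI unfolding maximal_chain_def maximal_in_def by auto
    then show ?thesis using chain_weight_pot[OF cov scS] h0 by simp
  qed
  show "omega_consistent S R \<omega>"
    unfolding omega_consistent_def omega_graded_def using W by auto
  show "\<forall>z\<in>S. rank S R \<omega> z = f z"
  proof
    fix z assume z: "z \<in> S"
    let ?Q = "\<lambda>c. sat_chain S R c \<and> minimal_in S R (hd c) \<and> last c = z"
    have "\<exists>c. ?Q c" using exists_chain[OF fin P z] .
    then have q: "?Q (SOME c. ?Q c)" by (rule someI_ex)
    have "chain_weight \<omega> (SOME c. ?Q c) = f z"
      using chain_weight_pot[OF cov] q mn by auto
    then show "rank S R \<omega> z = f z" unfolding rank_def by simp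
  qed
qed

lemma to_ideal:
  assumes P: "poset_on S R" and sc: "sat_chain S R c" and mn: "minimal_in S R (hd c)"
  shows "maximal_chain (principal_ideal S R (last c)) R c"
proof -
  let ?I = "principal_ideal S R (last c)"
  have ne: "c \<noteq> []" using sc unfolding sat_chain_def by auto
  have sub: "set c \<subseteq> ?I" using chain_le_last[OF P sc] sc unfolding principal_ideal_def sat_chain_def
    by auto
  have IS: "?I \<subseteq> S" unfolding principal_ideal_def by auto
  have scI: "sat_chain ?I R c" unfolding sat_chain_def
  proof (intro conjI allI impI)
    show "c \<noteq> []" "set c \<subseteq> ?I" using ne sub by simp_all
    fix i assume i: "Suc i < length c"
    then have cv: "covers S R (c ! i) (c ! Suc i)" using sc unfolding sat_chain_def by blast
    have "c ! i \<in> ?I" "c ! Suc i \<in> ?I" using sub i nth_mem[of i c] nth_mem[of "Suc i" c] by auto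
    then show "covers ?I R (c ! i) (c ! Suc i)" using cv IS unfolding covers_def by blast
  qed
  have "hd c \<in> ?I" using sub ne hd_in_set[of c] by blast
  then have mI: "minimal_in ?I R (hd c)" using mn IS unfolding minimal_in_def by blast
  have lI: "last c \<in> ?I" using sub ne last_in_set[of c] by blast
  moreover have "maximal_in ?I R (last c)"
    unfolding maximal_in_def
  proof (intro conjI ballI impI)
    show "last c \<in> ?I" using lI .
    fix b assume "b \<in> ?I" "R (last c) b"
    then show "b = last c" using poset_anti[OF P] lI unfolding principal_ideal_def by blast
  qed
  ultimately show ?thesis using scI mI unfolding maximal_chain_def by blast
qed

lemma rank_chain:
  assumes P: "poset_on S R" and C: "omega_consistent S R \<omega>"
    and sc: "sat_chain S R c" and mn: "minimal_in S R (hd c)"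
  shows "chain_weight \<omega> c = rank S R \<omega> (last c)"
proof -
  let ?z = "last c"
  let ?Q = "\<lambda>c. sat_chain S R c \<and> minimal_in S R (hd c) \<and> last c = ?z"
  have "?Q c" using sc mn by auto
  then have q: "?Q (SOME c. ?Q c)" by (rule someI)
  have ne: "c \<noteq> []" using sc unfolding sat_chain_def by auto
  have zS: "?z \<in> S" using sc ne unfolding sat_chain_def by auto
  have m1: "maximal_chain (principal_ideal S R ?z) R c" using to_ideal[OF P sc mn] .
  have m2: "maximal_chain (principal_ideal S R ?z) R (SOME c. ?Q c)"
    using to_ideal[OF P] q by metis
  show ?thesis using C zS m1 m2 unfolding omega_consistent_def omega_graded_def rank_def
    by blast
qed

lemma rank_cover:
  assumes fin: "finite S" and P: "poset_on S R" and C: "omega_consistent S R \<omega>"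
    and cv: "covers S R u v"
  shows "rank S R \<omega> v = rank S R \<omega> u + eps \<omega> u v"
proof -
  have uS: "u \<in> S" using cv unfolding covers_def by auto
  obtain c where c: "sat_chain S R c" "minimal_in S R (hd c)" "last c = u"
    using exists_chain[OF fin P uS] by blast
  have ne: "c \<noteq> []" using c unfolding sat_chain_def by auto
  have sc: "sat_chain S R (c @ [v])" using sat_chain_snoc[OF ne] c cv by auto
  have "chain_weight \<omega> (c @ [v]) = rank S R \<omega> v"
    using rank_chain[OF P C sc] c ne by simp
  moreover have "chain_weight \<omega> c = rank S R \<omega> u" using rank_chain[OF P C c(1,2)] c by simp
  ultimately show ?thesis using chain_weight_snoc[OF ne] c by simp
qed

lemma rank_minimal:
  assumes P: "poset_on S R" and C: "omega_consistent S R \<omega>" and m: "minimal_in S R m"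
  shows "rank S R \<omega> m = 0"
proof -
  have "sat_chain S R [m]" using m unfolding sat_chain_def minimal_in_def by auto
  then have "chain_weight \<omega> [m] = rank S R \<omega> m" using rank_chain[OF P C] m by fastforce
  then show ?thesis by (simp add: chain_weight_def)
qed

lemma char_add:
  assumes P: "poset_on S le" and uS: "u \<in> S" and vS: "v \<in> S"
    and r: "(a, b) \<in> ({(s, t). covers S le s t} \<union> {(u, v)})\<^sup>*"
  shows "(a = b \<or> (a \<in> S \<and> b \<in> S \<and> le a b)) \<or>
         ((a = u \<or> (a \<in> S \<and> u \<in> S \<and> le a u)) \<and> (v = b \<or> (v \<in> S \<and> b \<in> S \<and> le v b)))"
  using r
proof (induction rule: rtrancl_induct)
  case base
  then show ?case by simp
next
  case (step b c)
  from step.hyps(2) show ?case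
  proof
    assume "(b, c) \<in> {(s, t). covers S le s t}"
    then have bc: "b \<in> S" "c \<in> S" "le b c" unfolding covers_def by auto
    from step.IH show ?case
    proof
      assume "a = b \<or> (a \<in> S \<and> b \<in> S \<and> le a b)"
      then show ?case using bc poset_trans[OF P] by blast
    next
      assume "(a = u \<or> (a \<in> S \<and> u \<in> S \<and> le a u)) \<and> (v = b \<or> (v \<in> S \<and> b \<in> S \<and> le v b))"
      then show ?case using bc vS poset_trans[OF P] by blast
    qed
  next
    assume "(b, c) \<in> {(u, v)}"
    then have "b = u" "c = v" by auto
    from step.IH show ?case
    proof
      assume "a = b \<or> (a \<in> S \<and> b \<in> S \<and> le a b)"
      then show ?case using \<open>b = u\<close> \<open>c = v\<close> uS by blast
    next
      assume "(a = u \<or> (a \<in> S \<and> u \<in> S \<and> le a u)) \<and> (v = b \<or> (v \<in> S \<and> b \<in> S \<and> le v b))"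
      then show ?case using \<open>c = v\<close> by blast
    qed
  qed
qed

lemma main_one:
  assumes fin: "finite S" and P: "poset_on S le" and C: "omega_consistent S le \<omega>"
    and uS: "u \<in> S" and vS: "v \<in> S" and nuv: "\<not> le u v" and nvu: "\<not> le v u"
    and rk: "rank S le \<omega> v = rank S le \<omega> u + eps \<omega> u v"
  shows "omega_consistent S (add_cover S le u v) \<omega> \<and>
         (\<forall>z\<in>S. rank S (add_cover S le u v) \<omega> z = rank S le \<omega> z)"
proof (rule consistent_pot[OF fin])
  let ?E = "{(s, t). covers S le s t} \<union> {(u, v)}"
  let ?R = "add_cover S le u v"
  have Rdef: "?R a b \<longleftrightarrow> (a, b) \<in> ?E\<^sup>*" for a b unfolding add_cover_def by simp
  have uv: "u \<noteq> v" using nuv poset_refl[OF P uS] by auto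
  note ltrans = poset_trans[OF P]
  note lanti = poset_anti[OF P]
  show "poset_on S ?R"
    unfolding poset_on_def
  proof (intro conjI ballI impI)
    fix a assume "a \<in> S" then show "?R a a" unfolding Rdef by simp
  next
    fix a b c assume "a \<in> S" "b \<in> S" "c \<in> S" "?R a b \<and> ?R b c"
    then show "?R a c" unfolding Rdef by auto
  next
    fix a b assume ab: "a \<in> S" "b \<in> S" "?R a b \<and> ?R b a"
    have c1: "(a = b \<or> (a \<in> S \<and> b \<in> S \<and> le a b)) \<or>
         ((a = u \<or> (a \<in> S \<and> u \<in> S \<and> le a u)) \<and> (v = b \<or> (v \<in> S \<and> b \<in> S \<and> le v b)))"
      using char_add[OF P uS vS] ab unfolding Rdef by blast
    have c2: "(b = a \<or> (b \<in> S \<and> a \<in> S \<and> le b a)) \<or>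
         ((b = u \<or> (b \<in> S \<and> u \<in> S \<and> le b u)) \<and> (v = a \<or> (v \<in> S \<and> a \<in> S \<and> le v a)))"
      using char_add[OF P uS vS] ab unfolding Rdef by blast
    define Q where "Q = (\<lambda>p q. p = q \<or> (p \<in> S \<and> q \<in> S \<and> le p q))"
    have Qt: "Q p r" if "Q p q" "Q q r" for p q r
      using that ltrans unfolding Q_def by blast
    have Qa: "p = q" if "Q p q" "Q q p" for p q
      using that lanti unfolding Q_def by blast
    have nQ: "\<not> Q v u" using uv nvu unfolding Q_def by auto
    have d1: "Q a b \<or> (Q a u \<and> Q v b)" using c1 unfolding Q_def by blast
    have d2: "Q b a \<or> (Q b u \<and> Q v a)" using c2 unfolding Q_def by blast
    show "a = b"
      using d1 d2 Qt Qa nQ by metis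
  qed
  show "\<forall>a b. covers S ?R a b \<longrightarrow> rank S le \<omega> b = rank S le \<omega> a + eps \<omega> a b"
  proof (intro allI impI)
    fix a b assume cv: "covers S ?R a b"
    then have "(a, b) \<in> ?E\<^sup>*" "a \<noteq> b" "a \<in> S" "b \<in> S" unfolding covers_def Rdef by auto
    then obtain w where w: "(a, w) \<in> ?E" "(w, b) \<in> ?E\<^sup>*"
      by (metis converse_rtranclE)
    have wS: "w \<in> S" using w(1) vS unfolding covers_def by auto
    have "?R a w" "?R w b" using w unfolding Rdef by auto
    then have "w = a \<or> w = b" using cv wS unfolding covers_def by blast
    moreover have "w \<noteq> a" using w(1) uv unfolding covers_def by auto
    ultimately have "(a, b) \<in> ?E" using w by auto
    then show "rank S le \<omega> b = rank S le \<omega> a + eps \<omega> a b"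
      using rank_cover[OF fin P C] rk by auto
  qed
  show "\<forall>m. minimal_in S ?R m \<longrightarrow> rank S le \<omega> m = 0"
  proof (intro allI impI)
    fix m assume m: "minimal_in S ?R m"
    show "rank S le \<omega> m = 0"
    proof (cases "minimal_in S le m")
      case True
      then show ?thesis using rank_minimal[OF P C] by auto
    next
      case False
      then obtain w where w: "covers S le w m"
        using exists_cover[OF fin P] m unfolding minimal_in_def by blast
      then have "?R w m" unfolding Rdef by auto
      then show ?thesis using m w unfolding minimal_in_def covers_def by auto
    qed
  qed
qed

theorem lemma3p1:
  fixes S :: "'a set" and le :: "'a \<Rightarrow> 'a \<Rightarrow> bool" and \<omega> :: "'a \<Rightarrow> nat" and x y :: 'a
  assumes "finite S"
    and "poset_on S le"
    and "bij_betw \<omega> S {1..card S}"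
    and "omega_consistent S le \<omega>"
    and "\<forall>a\<in>S. \<forall>b\<in>S. rank S le \<omega> a < rank S le \<omega> b \<longrightarrow> \<omega> a < \<omega> b"
    and "x \<in> S" and "y \<in> S" and "\<not> le x y" and "\<not> le y x"
    and "rank S le \<omega> y = rank S le \<omega> x + 1"
  shows "omega_consistent S (add_cover S le x y) \<omega> \<and>
         (\<forall>z\<in>S. rank S (add_cover S le x y) \<omega> z = rank S le \<omega> z) \<and>
         omega_consistent S (add_cover S le y x) \<omega> \<and>
         (\<forall>z\<in>S. rank S (add_cover S le y x) \<omega> z = rank S le \<omega> z)"
proof -
  have lt: "\<omega> x < \<omega> y" using assms(5,6,7,10) by auto
  have e1: "eps \<omega> x y = 1" using lt unfolding eps_def by simp
  have e2: "eps \<omega> y x = -1" using lt unfolding eps_def by simp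
  have A: "omega_consistent S (add_cover S le x y) \<omega> \<and>
         (\<forall>z\<in>S. rank S (add_cover S le x y) \<omega> z = rank S le \<omega> z)"
    using main_one[OF assms(1,2,4,6,7,8,9)] assms(10) e1 by simp
  have B: "omega_consistent S (add_cover S le y x) \<omega> \<and>
         (\<forall>z\<in>S. rank S (add_cover S le y x) \<omega> z = rank S le \<omega> z)"
    using main_one[OF assms(1,2,4,7,6,9,8)] assms(10) e2 by simp
  show ?thesis using A B by blast
qed

end
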